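(* Let $\varepsilon\in(0,1]$, $L\in[0,\infty)$, $q\in(1,\infty)$, let $f\colon\mathbb R\to\mathbb R$ satisfy $|f(x)-f(y)|\le L|x-y|$ for all $x,y\in\mathbb R$, and let $a\in C(\mathbb R,\mathbb R)$ satisfy $a(x)=\ln(1+\exp(x))$ for all $x\in\mathbb R$. Then there exists $\mathbf G\in\mathbf N$ such that (i) $\mathcal R_a(\mathbf G)\in C(\mathbb R,\mathbb R)$; (ii) $\mathcal H(\mathbf G)=1$; (iii) $|(\mathcal R_a(\mathbf G))(x)-(\mathcal R_a(\mathbf G))(y)|\le L|x-y|$ for all $x,y\in\mathbb R$; (iv) $|(\mathcal R_a(\mathbf G))(x)-f(x)|\le2\varepsilon\max\{1,|x|^q\}$ for all $x\in\mathbb R$; (v) $\mathbb D_1(\mathbf G)\le2(\max\{1,2L\})^{q/(q-1)}\varepsilon^{-q/(q-1)}+1$; and (vi) $\mathcal P(\mathbf G)=3\mathbb D_1(\mathbf G)+1\le12(\max\{1,2L\})^{q/(q-1)}\varepsilon^{-q/(q-1)}$.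
   Context: Artificial neural networks (ANNs). Let $\mathbb N=\{1,2,\dots\}$ and $\mathbf N=\bigcup_{L\in\mathbb N}\bigcup_{l_0,\dots,l_L\in\mathbb N}\prod_{k=1}^L(\mathbb R^{l_k\times l_{k-1}}\times\mathbb R^{l_k})$. For $\Phi=((W_1,B_1),\dots,(W_L,B_L))$ in the $(l_0,\dots,l_L)$ component, $\mathcal P(\Phi)=\sum_{k=1}^Ll_k(l_{k-1}+1)$, $\mathcal H(\Phi)=L-1$, $\mathbb D_1(\Phi)=l_1$. For $a\in C(\mathbb R,\mathbb R)$ the realization $\mathcal R_a(\Phi)\colon\mathbb R^{l_0}\to\mathbb R^{l_L}$ is $(\mathcal R_a(\Phi))(x_0)=W_Lx_{L-1}+B_L$ with $x_k=\mathfrak M_{a,l_k}(W_kx_{k-1}+B_k)$, $k=1,\dots,L-1$, where $\mathfrak M_{a,m}$ applies $a$ componentwise. *)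

theory Defs
  imports "HOL-Analysis.Analysis"
begin

text \<open>A network is a list of layers (W_k, B_k);
  a weight matrix W_k in R^{l_k x l_{k-1}} is a list of l_k rows, each of length l_{k-1};
  a bias B_k in R^{l_k} is a list of length l_k.\<close>

type_synonym layer = "real list list \<times> real list"
type_synonym ann = "layer list"

definition in_dim :: "ann \<Rightarrow> nat" where
  "in_dim \<Phi> = length (hd (fst (hd \<Phi>)))"

definition dims :: "ann \<Rightarrow> nat list" where
  "dims \<Phi> = in_dim \<Phi> # map (\<lambda>l. length (snd l)) \<Phi>"

definition out_dim :: "ann \<Rightarrow> nat" where
  "out_dim \<Phi> = last (dims \<Phi>)"

definition valid_ann :: "ann \<Rightarrow> bool" where
  "valid_ann \<Phi> \<longleftrightarrow> \<Phi> \<noteq> [] \<and>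
     (\<forall>k < length \<Phi>. length (snd (\<Phi> ! k)) \<ge> 1 \<and>
        length (fst (\<Phi> ! k)) = length (snd (\<Phi> ! k)) \<and>
        (\<forall>row \<in> set (fst (\<Phi> ! k)). length row = dims \<Phi> ! k)) \<and>
     in_dim \<Phi> \<ge> 1"

definition params :: "ann \<Rightarrow> nat" where
  "params \<Phi> = (\<Sum>k<length \<Phi>. dims \<Phi> ! (k+1) * (dims \<Phi> ! k + 1))"

definition hidden :: "ann \<Rightarrow> nat" where
  "hidden \<Phi> = length \<Phi> - 1"

definition D1 :: "ann \<Rightarrow> nat" where
  "D1 \<Phi> = dims \<Phi> ! 1"

definition matvec :: "real list list \<Rightarrow> real list \<Rightarrow> real list" where
  "matvec W x = map (\<lambda>row. sum_list (map2 (*) row x)) W"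

definition affine :: "layer \<Rightarrow> real list \<Rightarrow> real list" where
  "affine l x = map2 (+) (matvec (fst l) x) (snd l)"

fun realize :: "(real \<Rightarrow> real) \<Rightarrow> ann \<Rightarrow> real list \<Rightarrow> real list" where
  "realize a [] x = x"
| "realize a [l] x = affine l x"
| "realize a (l # l' # ls) x = realize a (l' # ls) (map a (affine l x))"

definition realize1 :: "(real \<Rightarrow> real) \<Rightarrow> ann \<Rightarrow> real \<Rightarrow> real" where
  "realize1 a \<Phi> x = hd (realize a \<Phi> [x])"

end

theory Submission
  imports Defs
begin


definition net1 :: "(real\<times>real\<times>real) list \<Rightarrow> real \<Rightarrow> ann" where
 "net1 ns c = [(map (\<lambda>(w,b,v). [w]) ns, map (\<lambda>(w,b,v). b) ns), ([map (\<lambda>(w,b,v). v) ns], [c])]"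

lemma net1_props:
  assumes "ns \<noteq> []"
  shows "valid_ann (net1 ns c) \<and> in_dim (net1 ns c) = 1 \<and> out_dim (net1 ns c) = 1 \<and>
    hidden (net1 ns c) = 1 \<and> D1 (net1 ns c) = length ns \<and> params (net1 ns c) = 3 * length ns + 1"
proof -
  have id: "in_dim (net1 ns c) = 1" using assms
    by (cases ns) (auto simp: in_dim_def net1_def split: prod.splits)
  have d: "dims (net1 ns c) = [1, length ns, 1]" using id
    by (simp add: dims_def net1_def)
  show ?thesis
    using assms id d
    apply (simp add: valid_ann_def out_dim_def hidden_def D1_def params_def)
    apply (auto simp: net1_def less_Suc_eq numeral_2_eq_2 Suc_le_eq split: prod.splits)
    done
qed

lemma net1_real:
  "realize1 a (net1 ns c) x = c + sum_list (map (\<lambda>(w,b,v). v * a (w*x+b)) ns)"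
  by (simp add: realize1_def net1_def affine_def matvec_def zip_map_map zip_same_conv_map
      o_def split_def)



definition sp :: "real \<Rightarrow> real" where "sp z = ln (1 + exp z)"

lemma pos1: "0 < 1 + exp (z::real)" using exp_gt_zero[of z] by linarith

lemma sp_ge: "max z 0 \<le> sp z"
proof -
  have "ln (exp z) \<le> ln (1 + exp z)"
    using pos1[of z] by (subst ln_le_cancel_iff) auto
  then have "z \<le> sp z" unfolding sp_def by simp
  moreover have "0 \<le> sp z" unfolding sp_def by simp
  ultimately show ?thesis by simp
qed

lemma sp_le: "sp z \<le> max z 0 + 1"
proof -
  have e1: "exp 1 \<ge> (2::real)" using exp_ge_add_one_self[of 1] by simp
  have "1 + exp z \<le> exp (max z 0 + 1)"
  proof (cases "z \<ge> 0")
    case True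
    have "exp (max z 0 + 1) = exp z * exp 1" using True by (simp add: exp_add)
    moreover have "1 \<le> exp z" using True by simp
    moreover have "exp z * 2 \<le> exp z * exp 1" using e1 by simp
    ultimately show ?thesis by linarith
  next
    case False
    have "exp z \<le> 1" using False by simp
    moreover have "exp (max z 0 + 1) = exp 1" using False by simp
    ultimately show ?thesis using e1 by linarith
  qed
  then have "ln (1 + exp z) \<le> ln (exp (max z 0 + 1))"
    using pos1[of z] by (subst ln_le_cancel_iff) auto
  then show ?thesis by (simp add: sp_def)
qed

lemma sp_ratio: "sp (u + d) - sp u = ln ((1 + exp u * exp d) / (1 + exp u))"
proof -
  have "0 < 1 + exp u * exp d" using pos1[of "u+d"] by (simp add: exp_add)
  then show ?thesis unfolding sp_def using pos1[of u] by (simp add: exp_add ln_div)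
qed

lemma sp_inc: assumes "0 \<le> d" shows "0 \<le> sp (u + d) - sp u" "sp (u + d) - sp u \<le> d"
proof -
  have E: "1 \<le> exp d" using assms by simp
  have A: "0 < exp u" by simp
  have P: "0 < 1 + exp u" by (rule pos1)
  have "exp u * 1 \<le> exp u * exp d" using E A by simp
  then have "1 \<le> (1 + exp u * exp d) / (1 + exp u)"
    using P by (simp add: field_simps)
  then show "0 \<le> sp (u + d) - sp u" by (simp add: sp_ratio)
  have "(1 + exp u * exp d) \<le> exp d * (1 + exp u)"
    using E A by (simp add: algebra_simps)
  then have Q: "(1 + exp u * exp d) / (1 + exp u) \<le> exp d"
    using P by (simp add: divide_simps)
  have "0 < (1 + exp u * exp d) / (1 + exp u)" using P by (simp add: add_pos_pos)
  then have "ln ((1 + exp u * exp d) / (1 + exp u)) \<le> ln (exp d)"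
    using Q by (subst ln_le_cancel_iff) auto
  then show "sp (u + d) - sp u \<le> d" by (simp add: sp_ratio)
qed

lemma sp_mono_inc: assumes "0 \<le> d" "u \<le> v" shows "sp (u + d) - sp u \<le> sp (v + d) - sp v"
proof -
  have E: "1 \<le> exp d" using assms by simp
  have AB: "exp u \<le> exp v" using assms by simp
  have P: "0 < 1 + exp u" "0 < 1 + exp v" by (rule pos1)+
  have "(1 + exp u * exp d) * (1 + exp v) \<le> (1 + exp v * exp d) * (1 + exp u)"
  proof -
    have "0 \<le> (exp v - exp u) * (exp d - 1)" using E AB by simp
    then show ?thesis by (simp add: algebra_simps)
  qed
  then have Q: "(1 + exp u * exp d) / (1 + exp u) \<le> (1 + exp v * exp d) / (1 + exp v)"
    using P by (simp add: divide_simps)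
  have "0 < (1 + exp u * exp d) / (1 + exp u)" using P by (simp add: add_pos_pos)
  then have "ln ((1 + exp u * exp d) / (1 + exp u)) \<le> ln ((1 + exp v * exp d) / (1 + exp v))"
    using Q by (subst ln_le_cancel_iff) auto
  then show ?thesis by (simp add: sp_ratio)
qed



lemma interp:
  fixes h t fa fb fx L :: real
  assumes "0 < h" "0 \<le> t" "t \<le> h" "\<bar>fa - fx\<bar> \<le> L*t" "\<bar>fb - fx\<bar> \<le> L*(h-t)" "0 \<le> L"
  shows "\<bar>fa + (fb - fa)/h * t - fx\<bar> \<le> L*h/2"
proof -
  define l where "l = t/h"
  have l0: "0 \<le> l" "l \<le> 1" using assms by (auto simp: l_def divide_simps)
  have eq: "fa + (fb - fa)/h * t - fx = (1-l)*(fa - fx) + l*(fb - fx)"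
    unfolding l_def using assms(1) by (simp add: field_simps)
  have "\<bar>(1-l)*(fa - fx) + l*(fb - fx)\<bar> \<le> (1-l)*\<bar>fa - fx\<bar> + l*\<bar>fb - fx\<bar>"
    using l0 by (metis abs_mult abs_of_nonneg abs_triangle_ineq diff_ge_0_iff_ge)
  also have "\<dots> \<le> (1-l)*(L*t) + l*(L*(h-t))"
    using l0 assms by (intro add_mono mult_left_mono) auto
  also have "\<dots> = L * (2 * t * (h - t) / h)"
    unfolding l_def using assms(1) by (simp add: field_simps)
  also have "\<dots> \<le> L * (h/2)"
  proof -
    have "0 \<le> (h - 2*t)*(h - 2*t)" by simp
    then have "4 * (t * (h - t)) \<le> h*h" by (simp add: algebra_simps)
    then have "2 * t * (h - t) / h \<le> h/2" using assms(1) by (simp add: divide_simps)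
    then show ?thesis using assms(6) by (rule mult_left_mono)
  qed
  finally show ?thesis using eq by simp
qed



lemma aux4: "(a::real)*(p - q) - a*(r - t) = a*((p - r) - (q - t))"
  by (simp add: algebra_simps)

lemma core:
  fixes f a :: "real \<Rightarrow> real" and L \<epsilon> R :: real and n :: nat
  assumes eps: "0 < \<epsilon>" and L0: "0 \<le> L" and R1: "1 \<le> R" and n0: "0 < n"
    and LR: "L * R \<le> real n * \<epsilon>"
    and lip: "\<forall>x y. \<bar>f x - f y\<bar> \<le> L * \<bar>x - y\<bar>"
    and act: "\<forall>z. a z = sp z"
  shows "\<exists>ns c. length ns = 2*n \<and>
     (\<forall>x y. \<bar>realize1 a (net1 ns c) x - realize1 a (net1 ns c) y\<bar> \<le> L * \<bar>x - y\<bar>) \<and>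
     (\<forall>x. \<bar>x\<bar> < R \<longrightarrow> \<bar>realize1 a (net1 ns c) x - f x\<bar> \<le> 2 * \<epsilon>) \<and>
     (\<forall>x. R \<le> \<bar>x\<bar> \<longrightarrow> \<bar>realize1 a (net1 ns c) x - f x\<bar> \<le> \<epsilon>/2 + L * \<bar>x\<bar>)"
proof -
  define h where "h = 2*R/real n"
  define xs where "xs j = -R + real j * h" for j :: nat
  define s where "s j = (f (xs (Suc j)) - f (xs j))/h" for j
  define k where "k = 2*(real n*L+1)/\<epsilon>"
  define \<phi> where "\<phi> t = sp (k*t)/k" for t
  define c where "c = f (xs 0)"
  define ns where "ns = map (\<lambda>j. (k, -k*xs j, s j/k)) [0..<n] @ map (\<lambda>j. (k, -k*xs (Suc j), -s j/k)) [0..<n]"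
  define g where "g x = c + (\<Sum>j<n. s j * (\<phi> (x - xs j) - \<phi> (x - xs (Suc j))))" for x
  have h0: "0 < h" using R1 n0 by (simp add: h_def)
  have k0: "0 < k" using eps L0 n0 by (simp add: k_def add_nonneg_pos)
  have xsS: "xs (Suc j) = xs j + h" for j by (simp add: xs_def algebra_simps)
  have xs0: "xs 0 = -R" by (simp add: xs_def)
  have xsn: "xs n = R" using n0 by (simp add: xs_def h_def)
  have xsmono: "xs i \<le> xs j" if "i \<le> j" for i j
    using that h0 by (simp add: xs_def mult_right_mono)
  have slip: "\<bar>s j\<bar> \<le> L" for j
  proof -
    have "\<bar>f (xs (Suc j)) - f (xs j)\<bar> \<le> L * h" using lip xsS h0 by (metis abs_of_pos add_diff_cancel_left')
    then show ?thesis using h0 by (simp add: s_def abs_divide divide_simps)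
  qed
  have geq: "realize1 a (net1 ns c) x = g x" for x
  proof -
    have t1: "s j * a (k * x - k * xs j) / k = s j * \<phi> (x - xs j)" for j
      using k0 act by (simp add: \<phi>_def algebra_simps)
    have t2: "s j * a (k * x - k * xs (Suc j)) / k = s j * \<phi> (x - xs (Suc j))" for j
      using k0 act by (simp add: \<phi>_def algebra_simps)
    have "realize1 a (net1 ns c) x = c + (\<Sum>j<n. s j * \<phi> (x - xs j)) + (\<Sum>j<n. - (s j * \<phi> (x - xs (Suc j))))"
      unfolding net1_real ns_def
      by (simp add: t1 t2 sum_set_upt_conv_sum_list_nat[symmetric] atLeast0LessThan o_def)
    then show ?thesis unfolding g_def by (simp add: sum_subtractf right_diff_distrib sum_negf)
  qed
  have phi_relu: "max t 0 \<le> \<phi> t" "\<phi> t \<le> max t 0 + 1/k" for t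
  proof -
    have m: "max (k*t) 0 = k * max t 0" using k0 by (auto simp: max_def mult_le_0_iff)
    show "max t 0 \<le> \<phi> t" using sp_ge[of "k*t"] k0 unfolding \<phi>_def m by (simp add: divide_simps mult.commute)
    show "\<phi> t \<le> max t 0 + 1/k" using sp_le[of "k*t"] k0 unfolding \<phi>_def m by (simp add: divide_simps mult.commute)
  qed
  have phi_inc: "0 \<le> \<phi> (u + d) - \<phi> u" "\<phi> (u + d) - \<phi> u \<le> d" if "0 \<le> d" for u d
  proof -
    have kd: "0 \<le> k*d" using k0 that by simp
    have e: "\<phi> (u + d) - \<phi> u = (sp (k*u + k*d) - sp (k*u))/k" by (simp add: \<phi>_def diff_divide_distrib algebra_simps)
    show "0 \<le> \<phi> (u + d) - \<phi> u" using sp_inc(1)[OF kd, of "k*u"] k0 by (simp add: e)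
    have "(sp (k*u + k*d) - sp (k*u))/k \<le> (k*d)/k"
      using sp_inc(2)[OF kd, of "k*u"] k0 by (intro divide_right_mono) auto
    then show "\<phi> (u + d) - \<phi> u \<le> d" using k0 by (simp add: e)
  qed
  have phi_mono: "\<phi> (u1 + d) - \<phi> u1 \<le> \<phi> (v1 + d) - \<phi> v1" if "0 \<le> d" "u1 \<le> v1" for u1 v1 d
  proof -
    have kd: "0 \<le> k*d" using k0 that by simp
    have kuv: "k * u1 \<le> k * v1" using k0 that by simp
    have e: "\<phi> (w + d) - \<phi> w = (sp (k*w + k*d) - sp (k*w))/k" for w by (simp add: \<phi>_def diff_divide_distrib algebra_simps)
    have "(sp (k*u1 + k*d) - sp (k*u1))/k \<le> (sp (k * v1 + k*d) - sp (k * v1))/k"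
      using sp_mono_inc[OF kd kuv] k0 by (intro divide_right_mono) auto
    then show ?thesis using e[of u1] e[of v1] by simp
  qed
  have lip1: "\<bar>g x - g y\<bar> \<le> L * (x - y)" if "y \<le> x" for x y
  proof -
    define d where "d j = \<phi> (x - xs j) - \<phi> (y - xs j)" for j
    have dx: "x - xs j = (y - xs j) + (x - y)" for j by simp
    have d0: "0 \<le> d j" "d j \<le> x - y" for j
      unfolding d_def using phi_inc(1)[of "x - y" "y - xs j", unfolded dx[symmetric]]
        phi_inc(2)[of "x - y" "y - xs j", unfolded dx[symmetric]] that by auto
    have dm: "d (Suc j) \<le> d j" for j
    proof -
      have "\<phi> ((y - xs (Suc j)) + (x - y)) - \<phi> (y - xs (Suc j)) \<le> \<phi> ((y - xs j) + (x - y)) - \<phi> (y - xs j)"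
        using that h0 by (intro phi_mono) (auto simp: xsS)
      then show ?thesis unfolding d_def dx[symmetric] .
    qed
    have "g x - g y = (\<Sum>j<n. s j * (d j - d (Suc j)))"
      unfolding g_def d_def by (simp add: sum_subtractf[symmetric] algebra_simps)
    also have "\<bar>\<dots>\<bar> \<le> (\<Sum>j<n. \<bar>s j * (d j - d (Suc j))\<bar>)" by (rule sum_abs)
    also have "\<dots> \<le> (\<Sum>j<n. L * (d j - d (Suc j)))"
    proof (rule sum_mono)
      fix j assume "j \<in> {..<n}"
      have "\<bar>s j * (d j - d (Suc j))\<bar> = \<bar>s j\<bar> * (d j - d (Suc j))" using dm[of j] by (simp add: abs_mult)
      also have "\<dots> \<le> L * (d j - d (Suc j))" using slip[of j] dm[of j] by (simp add: mult_right_mono)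
      finally show "\<bar>s j * (d j - d (Suc j))\<bar> \<le> L * (d j - d (Suc j))" .
    qed
    also have "\<dots> = L * (d 0 - d n)" by (simp add: sum_distrib_left[symmetric] sum_lessThan_telescope')
    also have "\<dots> \<le> L * (x - y)" using d0[of 0] d0[of n] L0 by (simp add: mult_left_mono)
    finally show ?thesis .
  qed
  have lipg: "\<bar>g x - g y\<bar> \<le> L * \<bar>x - y\<bar>" for x y
  proof (cases "y \<le> x")
    case True then show ?thesis using lip1[of y x] by simp
  next
    case False then show ?thesis using lip1[of x y] by (simp add: abs_minus_commute)
  qed
  define I where "I x = c + (\<Sum>j<n. s j * (max (x - xs j) 0 - max (x - xs (Suc j)) 0))" for x
  have gI: "\<bar>g x - I x\<bar> \<le> \<epsilon>/2" for x
  proof -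
    define D where "D j = (\<phi> (x - xs j) - max (x - xs j) 0) - (\<phi> (x - xs (Suc j)) - max (x - xs (Suc j)) 0)" for j
    have Db: "\<bar>D j\<bar> \<le> 1/k" for j
      using phi_relu[of "x - xs j"] phi_relu[of "x - xs (Suc j)"] unfolding D_def abs_le_iff by linarith
    have "g x - I x = (\<Sum>j<n. s j * (\<phi> (x - xs j) - \<phi> (x - xs (Suc j)))) - (\<Sum>j<n. s j * (max (x - xs j) 0 - max (x - xs (Suc j)) 0))"
      unfolding g_def I_def by simp
    also have "\<dots> = (\<Sum>j<n. s j * (\<phi> (x - xs j) - \<phi> (x - xs (Suc j))) - s j * (max (x - xs j) 0 - max (x - xs (Suc j)) 0))"
      by (rule sum_subtractf[symmetric])
    also have "\<dots> = (\<Sum>j<n. s j * D j)"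
      by (rule sum.cong[OF refl]) (unfold D_def, rule aux4)
    finally have e: "g x - I x = (\<Sum>j<n. s j * D j)" .
    have "\<bar>\<Sum>j<n. s j * D j\<bar> \<le> (\<Sum>j<n. \<bar>s j * D j\<bar>)" by (rule sum_abs)
    also have "\<dots> \<le> (\<Sum>j<n. L * (1/k))"
    proof (rule sum_mono)
      fix j assume "j \<in> {..<n}"
      show "\<bar>s j * D j\<bar> \<le> L * (1/k)"
        unfolding abs_mult using slip[of j] Db[of j] L0 by (intro mult_mono) auto
    qed
    also have "\<dots> = real n * L / k" by simp
    also have "\<dots> \<le> \<epsilon>/2"
    proof -
      have kk: "\<epsilon>/2 * k = real n * L + 1" unfolding k_def using eps by simp
      have "real n * L \<le> \<epsilon>/2 * k" using kk by linarith
      then show ?thesis using k0 by (simp add: pos_divide_le_eq)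
    qed
    finally show ?thesis using e by simp
  qed
  have tele: "(\<Sum>j<m. s j * h) = f (xs m) - f (xs 0)" for m
  proof -
    have "(\<Sum>j<m. s j * h) = (\<Sum>j<m. f (xs (Suc j)) - f (xs j))"
      using h0 by (intro sum.cong) (auto simp: s_def)
    then show ?thesis using sum_lessThan_telescope[of "\<lambda>j. f (xs j)" m] by simp
  qed
  have Iout: "\<bar>I x - f x\<bar> \<le> L * \<bar>x\<bar>" if "R \<le> \<bar>x\<bar>" for x
  proof (cases "x \<le> 0")
    case True
    then have xR: "x \<le> -R" using that by simp
    have "I x = c"
    proof -
      have "max (x - xs j) 0 = 0" for j using xsmono[of 0 j] xs0 xR by simp
      then show ?thesis unfolding I_def by simp
    qed
    then have "\<bar>I x - f x\<bar> = \<bar>f (-R) - f x\<bar>" by (simp add: c_def xs0)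
    also have "\<dots> \<le> L * \<bar>-R - x\<bar>" using lip by blast
    also have "\<dots> \<le> L * \<bar>x\<bar>" using xR R1 L0 by (intro mult_left_mono) auto
    finally show ?thesis .
  next
    case False
    then have xR: "R \<le> x" using that by simp
    have "I x = c + (\<Sum>j<n. s j * h)"
    proof -
      have "max (x - xs j) 0 - max (x - xs (Suc j)) 0 = h" if "j < n" for j
        using xsmono[of "Suc j" n] xsn xR that h0 by (simp add: xsS)
      then show ?thesis unfolding I_def by simp
    qed
    then have "\<bar>I x - f x\<bar> = \<bar>f R - f x\<bar>" by (simp add: c_def tele xsn)
    also have "\<dots> \<le> L * \<bar>R - x\<bar>" using lip by blast
    also have "\<dots> \<le> L * \<bar>x\<bar>" using xR R1 L0 by (intro mult_left_mono) auto
    finally show ?thesis .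
  qed
  have Iin: "\<bar>I x - f x\<bar> \<le> \<epsilon>" if "\<bar>x\<bar> < R" for x
  proof -
    define m where "m = nat \<lfloor>(x + R)/h\<rfloor>"
    have xpos: "0 < (x + R)/h" using that h0 by simp
    have mle: "real m \<le> (x + R)/h" unfolding m_def using xpos by linarith
    have mgt: "(x + R)/h < real m + 1" unfolding m_def using xpos by linarith
    have lo: "xs m \<le> x" using mle h0 by (simp add: xs_def divide_simps algebra_simps)
    have hi: "x < xs (Suc m)" using mgt h0 by (simp add: xs_def divide_simps algebra_simps)
    have mn: "m < n"
    proof -
      have "(x + R)/h < 2*R/h" using that h0 by (simp add: divide_strict_right_mono)
      also have "2*R/h = real n" using n0 R1 by (simp add: h_def)
      finally show ?thesis using mle by linarith
    qed
    define T where "T j = max (x - xs j) 0 - max (x - xs (Suc j)) 0" for j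
    have T1: "T j = h" if "j < m" for j
      using xsmono[of "Suc j" m] lo that h0 by (simp add: T_def xsS)
    have T2: "T m = x - xs m" using lo hi by (simp add: T_def)
    have T3: "T j = 0" if "m < j" for j
      using xsmono[of "Suc m" j] hi that h0 by (simp add: T_def xsS)
    have "(\<Sum>j<n. s j * T j) = (\<Sum>j<Suc m. s j * T j)"
      using mn T3 by (intro sum.mono_neutral_right) auto
    also have "\<dots> = (\<Sum>j<m. s j * h) + s m * (x - xs m)"
      using T1 T2 by simp
    finally have "I x = f (xs m) + s m * (x - xs m)"
      unfolding I_def T_def[symmetric] by (simp add: tele c_def)
    also have "\<dots> = f (xs m) + (f (xs (Suc m)) - f (xs m))/h * (x - xs m)" by (simp add: s_def)
    finally have Ix: "I x - f x = f (xs m) + (f (xs (Suc m)) - f (xs m))/h * (x - xs m) - f x" by simp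
    have "\<bar>\<dots>\<bar> \<le> L*h/2"
    proof (rule interp)
      show "0 < h" by (rule h0)
      show "0 \<le> x - xs m" using lo by simp
      show "x - xs m \<le> h" using hi by (simp add: xsS)
      show "\<bar>f (xs m) - f x\<bar> \<le> L*(x - xs m)" using lip lo by (metis abs_minus_commute abs_of_nonneg diff_ge_0_iff_ge)
      show "\<bar>f (xs (Suc m)) - f x\<bar> \<le> L*(h - (x - xs m))"
      proof -
        have e: "h - (x - xs m) = xs (Suc m) - x" by (simp add: xsS)
        have "\<bar>f (xs (Suc m)) - f x\<bar> \<le> L * \<bar>xs (Suc m) - x\<bar>" using lip by blast
        then show ?thesis unfolding e using hi by simp
      qed
      show "0 \<le> L" by (rule L0)
    qed
    also have "L*h/2 = L*R/real n" by (simp add: h_def)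
    also have "\<dots> \<le> \<epsilon>" using LR n0 by (simp add: divide_simps mult.commute)
    finally show ?thesis using Ix by simp
  qed
  show ?thesis
  proof (intro exI conjI allI impI)
    show "length ns = 2*n" by (simp add: ns_def)
    show "\<bar>realize1 a (net1 ns c) x - realize1 a (net1 ns c) y\<bar> \<le> L * \<bar>x - y\<bar>" for x y
      using lipg by (simp add: geq)
    show "\<bar>realize1 a (net1 ns c) x - f x\<bar> \<le> 2 * \<epsilon>" if "\<bar>x\<bar> < R" for x
    proof -
      have t: "\<bar>g x - f x\<bar> \<le> \<bar>g x - I x\<bar> + \<bar>I x - f x\<bar>" using abs_triangle_ineq[of "g x - I x" "I x - f x"] by simp
      show ?thesis unfolding geq using t gI[of x] Iin[OF that] by linarith
    qed
    show "\<bar>realize1 a (net1 ns c) x - f x\<bar> \<le> \<epsilon>/2 + L * \<bar>x\<bar>" if "R \<le> \<bar>x\<bar>" for x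
    proof -
      have t: "\<bar>g x - f x\<bar> \<le> \<bar>g x - I x\<bar> + \<bar>I x - f x\<bar>" using abs_triangle_ineq[of "g x - I x" "I x - f x"] by simp
      show ?thesis unfolding geq using t gI[of x] Iout[OF that] by linarith
    qed
  qed
qed



theorem mainTheorem18:
  fixes \<epsilon> L q :: real and f a :: "real \<Rightarrow> real"
  assumes "0 < \<epsilon>" and "\<epsilon> \<le> 1" and "0 \<le> L" and "1 < q"
    and "\<forall>x y. \<bar>f x - f y\<bar> \<le> L * \<bar>x - y\<bar>"
    and "continuous_on UNIV a"
    and "\<forall>x. a x = ln (1 + exp x)"
  shows "\<exists>G. valid_ann G \<and> in_dim G = 1 \<and> out_dim G = 1 \<and>
     continuous_on UNIV (realize1 a G) \<and>
     hidden G = 1 \<and>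
     (\<forall>x y. \<bar>realize1 a G x - realize1 a G y\<bar> \<le> L * \<bar>x - y\<bar>) \<and>
     (\<forall>x. \<bar>realize1 a G x - f x\<bar> \<le> 2 * \<epsilon> * max 1 (\<bar>x\<bar> powr q)) \<and>
     real (D1 G) \<le> 2 * (max 1 (2 * L)) powr (q / (q - 1)) * \<epsilon> powr (- q / (q - 1)) + 1 \<and>
     params G = 3 * D1 G + 1 \<and>
     real (params G) \<le> 12 * (max 1 (2 * L)) powr (q / (q - 1)) * \<epsilon> powr (- q / (q - 1))"
proof -
  note eps = assms(1) and eps1 = assms(2) and L0 = assms(3) and q1 = assms(4)
  define p where "p = q/(q-1)"
  define M where "M = max 1 (2*L)"
  define T where "T = M powr p * \<epsilon> powr (- q / (q - 1))"
  have p1: "1 \<le> p" using q1 by (simp add: p_def divide_simps)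
  have negp: "- q / (q - 1) = - p" by (simp add: p_def)
  have M1: "1 \<le> M" by (simp add: M_def)
  have Mp: "1 \<le> M powr p" using M1 p1 by (intro ge_one_powr_ge_zero) auto
  have ep: "\<epsilon> powr (- p) = inverse (\<epsilon> powr p)" by (simp add: powr_minus)
  have ep1: "\<epsilon> powr p \<le> 1" using eps eps1 p1 by (intro powr_le1) auto
  have ep0: "0 < \<epsilon> powr p" using eps by simp
  have epi: "1 \<le> \<epsilon> powr (- p)" unfolding ep using ep1 ep0 by (simp add: one_le_inverse_iff)
  have T1: "1 \<le> T" unfolding T_def negp using Mp epi
    by (metis mult_mono' mult_1_left one_le_numeral zero_le_one order_trans less_le_not_le)
  have absq: "1 \<le> \<bar>x\<bar> powr q" if "1 \<le> \<bar>x\<bar>" for x using that q1 by (intro ge_one_powr_ge_zero) auto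
  obtain R n where R1: "1 \<le> R" and n0: "0 < n" and LR: "L * R \<le> real n * \<epsilon>"
    and Rq: "\<And>x. R \<le> \<bar>x\<bar> \<Longrightarrow> L * \<bar>x\<bar> \<le> \<epsilon> * \<bar>x\<bar> powr q"
    and cnt: "real (2*n) \<le> 2*T + 1"
  proof (cases "L \<le> \<epsilon>")
    case True
    show ?thesis
    proof (rule that[of 1 1])
      show "L * 1 \<le> real 1 * \<epsilon>" using True by simp
      show "L * \<bar>x\<bar> \<le> \<epsilon> * \<bar>x\<bar> powr q" if "1 \<le> \<bar>x\<bar>" for x
      proof -
        have "\<bar>x\<bar> powr 1 \<le> \<bar>x\<bar> powr q" using that q1 by (intro powr_mono) auto
        then have "\<bar>x\<bar> \<le> \<bar>x\<bar> powr q" using that by simp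
        then have "\<epsilon> * \<bar>x\<bar> \<le> \<epsilon> * \<bar>x\<bar> powr q" using eps by simp
        moreover have "L * \<bar>x\<bar> \<le> \<epsilon> * \<bar>x\<bar>" using True by (simp add: mult_right_mono)
        ultimately show ?thesis by linarith
      qed
      show "real (2*1) \<le> 2*T + 1" using T1 by simp
    qed auto
  next
    case False
    define r where "r = L/\<epsilon>"
    have r1: "1 < r" using False eps by (simp add: r_def)
    define R where "R = r powr (1/(q-1))"
    define n where "n = nat \<lceil>r powr p\<rceil>"
    have rp1: "1 \<le> r powr p" using r1 p1 by (intro ge_one_powr_ge_zero) auto
    have R1: "1 \<le> R" unfolding R_def using r1 q1 by (intro ge_one_powr_ge_zero) auto
    have nge: "r powr p \<le> real n" unfolding n_def by linarith
    have nle: "real n \<le> r powr p + 1" unfolding n_def using rp1 by linarith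
    have n0: "0 < n" using nge rp1 by simp
    show ?thesis
    proof (rule that[of R n, OF R1 n0])
      have "r * R = r powr (1 + 1/(q-1))" unfolding R_def using r1 by (simp add: powr_add)
      also have "1 + 1/(q-1) = p" using q1 by (simp add: p_def field_simps)
      finally have rR: "r * R = r powr p" .
      have "L * R = \<epsilon> * (r * R)" using eps by (simp add: r_def)
      also have "\<dots> \<le> \<epsilon> * real n" using rR nge eps by simp
      finally show "L * R \<le> real n * \<epsilon>" by (simp add: mult.commute)
      show "L * \<bar>x\<bar> \<le> \<epsilon> * \<bar>x\<bar> powr q" if "R \<le> \<bar>x\<bar>" for x
      proof -
        have x0: "0 < \<bar>x\<bar>" using that R1 by simp
        have "R powr (q-1) \<le> \<bar>x\<bar> powr (q-1)" using that R1 q1 by (intro powr_mono2) auto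
        moreover have "R powr (q-1) = r" unfolding R_def using r1 q1 by (simp add: powr_powr)
        ultimately have rx: "r \<le> \<bar>x\<bar> powr (q-1)" by simp
        have xq: "\<bar>x\<bar> powr q = \<bar>x\<bar> * \<bar>x\<bar> powr (q-1)" using powr_add[of "\<bar>x\<bar>" 1 "q-1"] x0 by simp
        have "L * \<bar>x\<bar> = \<epsilon> * (\<bar>x\<bar> * r)" using eps by (simp add: r_def)
        also have "\<dots> \<le> \<epsilon> * (\<bar>x\<bar> * \<bar>x\<bar> powr (q-1))" using rx eps x0 by simp
        finally show ?thesis using xq by simp
      qed
      have "T \<ge> 2 * r powr p"
      proof -
        have ei0: "0 \<le> \<epsilon> powr (-p)" by simp
        have A: "(2*L) powr p * \<epsilon> powr (-p) \<le> M powr p * \<epsilon> powr (-p)"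
          using ei0 unfolding M_def using L0 p1 by (intro mult_right_mono powr_mono2) auto
        have rp: "r powr p = L powr p * \<epsilon> powr (-p)"
        proof -
          have "(L/\<epsilon>) powr p = L powr p / \<epsilon> powr p" by (rule powr_divide)
          then show ?thesis unfolding r_def powr_minus by (simp only: divide_inverse)
        qed
        have B: "(2*L) powr p * \<epsilon> powr (-p) = 2 powr p * r powr p"
          unfolding rp using L0 by (simp add: powr_mult mult.assoc)
        have C: "2 * r powr p \<le> 2 powr p * r powr p"
          using p1 powr_mono[of 1 p 2] by (intro mult_right_mono) auto
        show ?thesis unfolding T_def negp using A B C by linarith
      qed
      then show "real (2*n) \<le> 2*T + 1" using nle rp1 by simp
    qed
  qed
  have act: "\<forall>z. a z = sp z" using assms(7) by (simp add: sp_def)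
  obtain ns c where len: "length ns = 2*n"
    and lipG: "\<forall>x y. \<bar>realize1 a (net1 ns c) x - realize1 a (net1 ns c) y\<bar> \<le> L * \<bar>x - y\<bar>"
    and inG: "\<forall>x. \<bar>x\<bar> < R \<longrightarrow> \<bar>realize1 a (net1 ns c) x - f x\<bar> \<le> 2 * \<epsilon>"
    and outG: "\<forall>x. R \<le> \<bar>x\<bar> \<longrightarrow> \<bar>realize1 a (net1 ns c) x - f x\<bar> \<le> \<epsilon>/2 + L * \<bar>x\<bar>"
    using core[OF eps L0 R1 n0 LR assms(5) act] by blast
  have nsne: "ns \<noteq> []" using len n0 by auto
  note props = net1_props[OF nsne, of c]
  show ?thesis
  proof (rule exI[of _ "net1 ns c"], intro conjI)
    show "valid_ann (net1 ns c)" "in_dim (net1 ns c) = 1" "out_dim (net1 ns c) = 1" "hidden (net1 ns c) = 1"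
      using props by auto
    show lip: "\<forall>x y. \<bar>realize1 a (net1 ns c) x - realize1 a (net1 ns c) y\<bar> \<le> L * \<bar>x - y\<bar>" by (rule lipG)
    show "continuous_on UNIV (realize1 a (net1 ns c))"
      by (rule lipschitz_on_continuous_on[of L], rule lipschitz_onI) (use lip L0 in \<open>auto simp: dist_real_def\<close>)
    show "\<forall>x. \<bar>realize1 a (net1 ns c) x - f x\<bar> \<le> 2 * \<epsilon> * max 1 (\<bar>x\<bar> powr q)"
    proof
      fix x
      show "\<bar>realize1 a (net1 ns c) x - f x\<bar> \<le> 2 * \<epsilon> * max 1 (\<bar>x\<bar> powr q)"
      proof (cases "\<bar>x\<bar> < R")
        case True
        have "2 * \<epsilon> \<le> 2 * \<epsilon> * max 1 (\<bar>x\<bar> powr q)" using eps by simp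
        then show ?thesis using inG True by fastforce
      next
        case False
        then have xR: "R \<le> \<bar>x\<bar>" by simp
        have aq: "1 \<le> \<bar>x\<bar> powr q" using absq R1 xR by simp
        have "\<bar>realize1 a (net1 ns c) x - f x\<bar> \<le> \<epsilon>/2 + L * \<bar>x\<bar>" using outG xR by blast
        also have "\<dots> \<le> \<epsilon>/2 + \<epsilon> * \<bar>x\<bar> powr q" using Rq[OF xR] by simp
        also have "\<dots> \<le> 2 * \<epsilon> * \<bar>x\<bar> powr q"
        proof -
          have "\<epsilon> * 1 \<le> \<epsilon> * \<bar>x\<bar> powr q" using aq eps by (intro mult_left_mono) auto
          then have E: "\<epsilon> \<le> \<epsilon> * \<bar>x\<bar> powr q" by simp
          have E2: "2 * \<epsilon> * \<bar>x\<bar> powr q = 2 * (\<epsilon> * \<bar>x\<bar> powr q)" by simp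
          show ?thesis unfolding E2 using E eps by linarith
        qed
        also have "\<dots> \<le> 2 * \<epsilon> * max 1 (\<bar>x\<bar> powr q)" using eps by (intro mult_left_mono) auto
        finally show ?thesis .
      qed
    qed
    have D: "D1 (net1 ns c) = 2*n" using props len by simp
    have Te: "2 * (max 1 (2 * L)) powr (q / (q - 1)) * \<epsilon> powr (- q / (q - 1)) = 2 * T"
      by (simp add: T_def M_def p_def)
    have Te2: "12 * (max 1 (2 * L)) powr (q / (q - 1)) * \<epsilon> powr (- q / (q - 1)) = 12 * T"
      by (simp add: T_def M_def p_def)
    show "real (D1 (net1 ns c)) \<le> 2 * (max 1 (2 * L)) powr (q / (q - 1)) * \<epsilon> powr (- q / (q - 1)) + 1"
      unfolding Te D using cnt .
    show "params (net1 ns c) = 3 * D1 (net1 ns c) + 1" using props by simp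
    show "real (params (net1 ns c)) \<le> 12 * (max 1 (2 * L)) powr (q / (q - 1)) * \<epsilon> powr (- q / (q - 1))"
    proof -
      have "real (params (net1 ns c)) = 3 * real (2*n) + 1" using props len by simp
      then show ?thesis unfolding Te2 using cnt T1 by linarith
    qed
  qed
qed


end
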